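(* Let $a>1$ be an integer. Then $$\lim_{n\to\infty}\frac{\#\{k\le n : \mathrm{LB}_3(a^k)=(1,0,0)\}}{n}=\log_\phi(1+\phi^{-2}),\qquad \lim_{n\to\infty}\frac{\#\{k\le n : \mathrm{LB}_3(a^k)=(1,0,1)\}}{n}=\log_\phi\frac{\phi}{1+\phi^{-2}};$$ in particular both limits exist.
   Context: Let $F$ be the shifted Fibonacci sequence: $F_1=1$, $F_2=2$, $F_{n+2}=F_{n+1}+F_n$. By Zeckendorf's theorem every positive integer $m$ has a unique expansion $m=\sum_{k=1}^M \epsilon(k)F_{M-k+1}$ with $\epsilon(k)\in\{0,1\}$, $\epsilon(1)=1$ and $\epsilon(k)\epsilon(k+1)=0$ for all $k\le M-1$. For $s\in\mathbb{N}$ with $M\ge s$, $\mathrm{LB}_s(m):=(\epsilon(1),\dots,\epsilon(s))$ (the leading block of length $s$); it is undefined if $M<s$. $\phi=(1+\sqrt5)/2$ is the golden ratio. *)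

theory Defs
  imports Complex_Main
begin

text \<open>Shifted Fibonacci sequence: F 1 = 1, F 2 = 2, F (n+2) = F (n+1) + F n (F 0 is a dummy value).\<close>
fun F :: "nat \<Rightarrow> nat" where
  "F 0 = 1"
| "F (Suc 0) = 1"
| "F (Suc (Suc 0)) = 2"
| "F (Suc (Suc (Suc n))) = F (Suc (Suc n)) + F (Suc n)"

text \<open>A digit list eps = [eps(1), ..., eps(M)] (list index i corresponds to eps(i+1)).\<close>
definition zeck_val :: "bool list \<Rightarrow> nat" where
  "zeck_val eps = (\<Sum>i<length eps. if eps ! i then F (length eps - i) else 0)"

definition zeck_valid :: "bool list \<Rightarrow> bool" where
  "zeck_valid eps \<longleftrightarrow> eps \<noteq> [] \<and> hd eps \<and>
     (\<forall>i. Suc i < length eps \<longrightarrow> \<not> (eps ! i \<and> eps ! Suc i))"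

text \<open>The Zeckendorf expansion of m (unique by Zeckendorf's theorem, for m > 0).\<close>
definition zeck :: "nat \<Rightarrow> bool list" where
  "zeck m = (THE eps. zeck_valid eps \<and> zeck_val eps = m)"

definition LB :: "nat \<Rightarrow> nat \<Rightarrow> bool list option" where
  "LB s m = (if s \<le> length (zeck m) then Some (take s (zeck m)) else None)"

definition phi :: real where
  "phi = (1 + sqrt 5) / 2"

end

theory Submission
  imports Defs "HOL-Analysis.Kronecker_Approximation_Theorem"
begin


lemma F_rec: "F (Suc (Suc n)) = F (Suc n) + F n"
  by (cases n) auto

lemma F_pos: "F n \<ge> 1"
  by (induction n rule: F.induct) auto

lemma F_mono_Suc: "F n \<le> F (Suc n)"
  by (cases n) (auto simp: F_rec)

lemma F_mono: "m \<le> n \<Longrightarrow> F m \<le> F n"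
  by (induction n rule: dec_induct) (auto intro: order_trans F_mono_Suc)

lemma F_strict_Suc: "n \<ge> 1 \<Longrightarrow> F n < F (Suc n)"
  using F_pos[of "n - 1"] F_rec[of "n - 1"] by (cases n) auto

lemma F_strict: "1 \<le> m \<Longrightarrow> m < n \<Longrightarrow> F m < F n"
  by (meson F_mono F_strict_Suc Suc_leI order_less_le_trans)

lemma F_ge: "F n \<ge> n"
  by (induction n rule: F.induct) (auto simp: F_rec)

declare F.simps(4)[simp del]

fun zv :: "bool list \<Rightarrow> nat" where
  "zv [] = 0"
| "zv (b # bs) = (if b then F (Suc (length bs)) else 0) + zv bs"

fun na :: "bool list \<Rightarrow> bool" where
  "na [] = True"
| "na [b] = True"
| "na (b # c # bs) = (\<not> (b \<and> c) \<and> na (c # bs))"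

lemma zeck_val_zv: "zeck_val xs = zv xs"
proof (induction xs)
  case Nil then show ?case by (simp add: zeck_val_def)
next
  case (Cons b bs)
  have "zeck_val (b # bs) = (\<Sum>i<Suc (length bs). if (b#bs) ! i then F (Suc (length bs) - i) else 0)"
    by (simp only: zeck_val_def length_Cons)
  also have "\<dots> = (if b then F (Suc (length bs)) else 0) + (\<Sum>i<length bs. if bs ! i then F (length bs - i) else 0)"
    by (subst sum.lessThan_Suc_shift) (auto intro!: sum.cong)
  finally show ?case using Cons by (simp add: zeck_val_def)
qed

lemma na_tl: "na (x # xs) \<Longrightarrow> na xs"
  by (cases xs) auto

lemma na_nth: "na xs \<longleftrightarrow> (\<forall>i. Suc i < length xs \<longrightarrow> \<not> (xs ! i \<and> xs ! Suc i))"
proof (induction xs rule: na.induct)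
  case (3 b c bs)
  show ?case
  proof
    assume "na (b # c # bs)"
    then show "\<forall>i. Suc i < length (b # c # bs) \<longrightarrow> \<not> ((b # c # bs) ! i \<and> (b # c # bs) ! Suc i)"
      using 3 by (auto simp: nth_Cons split: nat.splits)
  next
    assume H: "\<forall>i. Suc i < length (b # c # bs) \<longrightarrow> \<not> ((b # c # bs) ! i \<and> (b # c # bs) ! Suc i)"
    have "\<not> (b \<and> c)" using H[rule_format, of 0] by simp
    moreover have "na (c # bs)" unfolding 3
    proof (intro allI impI)
      fix i assume "Suc i < length (c # bs)"
      then show "\<not> ((c # bs) ! i \<and> (c # bs) ! Suc i)" using H[rule_format, of "Suc i"] by simp
    qed
    ultimately show "na (b # c # bs)" by simp
  qed
qed auto

lemma zeck_valid_na: "zeck_valid xs \<longleftrightarrow> xs \<noteq> [] \<and> hd xs \<and> na xs"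
  unfolding zeck_valid_def na_nth by simp

lemma zv_bound: "na xs \<Longrightarrow> zv xs < F (Suc (length xs))"
proof (induction "length xs" arbitrary: xs rule: less_induct)
  case less
  show ?case
  proof (cases xs)
    case Nil then show ?thesis by simp
  next
    case (Cons b bs)
    note bs = this
    show ?thesis
    proof (cases bs)
      case Nil then show ?thesis using bs by simp
    next
      case (Cons c cs)
      have nbs: "na bs" using less.prems bs na_tl by blast
      have ncs: "na cs" using nbs Cons na_tl by blast
      have IH1: "zv bs < F (Suc (length bs))" using less.hyps[of bs] nbs bs by simp
      have IH2: "zv cs < F (Suc (length cs))" using less.hyps[of cs] ncs bs Cons by simp
      show ?thesis
      proof (cases b)
        case True
        then have "\<not> c" using less.prems bs Cons by simp
        then have "zv xs = F (Suc (Suc (length cs))) + zv cs" using bs Cons True by simp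
        also have "\<dots> < F (Suc (Suc (length cs))) + F (Suc (length cs))" using IH2 by simp
        also have "\<dots> = F (Suc (length xs))" using bs Cons F_rec[of "Suc (length cs)"] by simp
        finally show ?thesis .
      next
        case False
        then have "zv xs = zv bs" using bs by simp
        also have "\<dots> < F (Suc (length bs))" by (rule IH1)
        also have "\<dots> \<le> F (Suc (length xs))" using bs F_mono by simp
        finally show ?thesis .
      qed
    qed
  qed
qed

lemma zv_unique: "na xs \<Longrightarrow> na ys \<Longrightarrow> length xs = length ys \<Longrightarrow> zv xs = zv ys \<Longrightarrow> xs = ys"
proof (induction xs arbitrary: ys)
  case Nil then show ?case by simp
next
  case (Cons x xs)
  then obtain y ys' where ys: "ys = y # ys'" by (cases ys) auto
  have n1: "na xs" and n2: "na ys'" using Cons.prems ys na_tl by blast+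
  have b1: "zv xs < F (Suc (length xs))" using zv_bound[OF n1] .
  have b2: "zv ys' < F (Suc (length ys'))" using zv_bound[OF n2] .
  have len: "length xs = length ys'" using Cons.prems ys by simp
  have "x = y"
  proof (rule ccontr)
    assume "x \<noteq> y"
    then show False using Cons.prems(4) ys b1 b2 len by (cases x; cases y) auto
  qed
  then have "zv xs = zv ys'" using Cons.prems(4) ys len by (cases y) auto
  then have "xs = ys'" using Cons.IH n1 n2 len by blast
  then show ?case using ys \<open>x = y\<close> by simp
qed

lemma zv_exists: "m < F (Suc L) \<Longrightarrow> \<exists>xs. length xs = L \<and> na xs \<and> zv xs = m"
proof (induction L arbitrary: m rule: less_induct)
  case (less L)
  show ?case
  proof (cases L)
    case 0 then show ?thesis using less.prems by (intro exI[of _ "[]"]) simp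
  next
    case (Suc L')
    show ?thesis
    proof (cases "m < F (Suc L')")
      case True
      then obtain ys where ys: "length ys = L'" "na ys" "zv ys = m" using less.IH[of L'] Suc by auto
      have "na (False # ys)" using ys(2) by (cases ys) auto
      then show ?thesis using ys Suc by (intro exI[of _ "False # ys"]) simp
    next
      case False
      show ?thesis
      proof (cases L')
        case 0
        then have "m = 1" using False less.prems Suc by simp
        then show ?thesis using Suc 0 by (intro exI[of _ "[True]"]) simp
      next
        case (Suc L'')
        have "m - F (Suc L') < F (Suc L'')" using less.prems False \<open>L = Suc L'\<close> Suc F_rec[of L'] by simp
        then obtain ys where ys: "length ys = L''" "na ys" "zv ys = m - F (Suc L')"
          using less.IH[of L''] \<open>L = Suc L'\<close> Suc by auto
        have "na (True # False # ys)" using ys(2) by (cases ys) auto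
        then show ?thesis using ys Suc \<open>L = Suc L'\<close> False
          by (intro exI[of _ "True # False # ys"]) simp
      qed
    qed
  qed
qed

lemma zeck_char:
  assumes "1 \<le> M" "F M \<le> m" "m < F (Suc M)"
  shows "length (zeck m) = M \<and> na (zeck m) \<and> zv (zeck m) = m \<and> zeck m \<noteq> [] \<and> hd (zeck m)"
proof -
  obtain xs where xs: "length xs = M" "na xs" "zv xs = m" using zv_exists assms(3) by blast
  obtain b bs where bbs: "xs = b # bs" using xs(1) assms(1) by (cases xs) auto
  have "b"
  proof (rule ccontr)
    assume "\<not> b"
    then have "zv xs = zv bs" using bbs by simp
    also have "\<dots> < F (Suc (length bs))" using zv_bound na_tl xs(2) bbs by blast
    also have "Suc (length bs) = M" using xs(1) bbs by simp
    finally show False using xs(3) assms(2) by simp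
  qed
  have v: "zeck_valid xs \<and> zeck_val xs = m" using xs bbs \<open>b\<close> by (simp add: zeck_valid_na zeck_val_zv)
  have u: "ys = xs" if "zeck_valid ys \<and> zeck_val ys = m" for ys
  proof -
    have ys: "ys \<noteq> []" "hd ys" "na ys" "zv ys = m" using that by (auto simp: zeck_valid_na zeck_val_zv)
    obtain c cs where ccs: "ys = c # cs" using ys(1) by (cases ys) auto
    have lo: "F (length ys) \<le> m" using ys ccs by simp
    have hi: "m < F (Suc (length ys))" using zv_bound ys by blast
    have "length ys = M"
    proof (rule ccontr)
      assume "length ys \<noteq> M"
      then consider "length ys < M" | "length ys > M" by linarith
      then show False
      proof cases
        case 1 then have "F (Suc (length ys)) \<le> F M" by (intro F_mono) simp
        then show False using hi assms(2) by simp
      next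
        case 2 then have "F (Suc M) \<le> F (length ys)" by (intro F_mono) simp
        then show False using lo assms(3) by simp
      qed
    qed
    then show ?thesis using zv_unique ys xs by metis
  qed
  have "zeck m = xs" unfolding zeck_def using v u by (rule the_equality) 
  then show ?thesis using xs bbs \<open>b\<close> by simp
qed

lemma F_bracket: "m \<ge> 1 \<Longrightarrow> \<exists>M. 1 \<le> M \<and> F M \<le> m \<and> m < F (Suc M)"
proof -
  assume m: "m \<ge> 1"
  have ex: "\<exists>M. m < F (Suc M)" using F_ge[of "Suc m"] by (intro exI[of _ m]) simp
  define M where "M = (LEAST M. m < F (Suc M))"
  have M1: "m < F (Suc M)" unfolding M_def by (rule LeastI_ex[OF ex])
  have M0: "M \<noteq> 0" using M1 m
    by (metis One_nat_def F.simps(2) M_def \<open>m < F (Suc M)\<close> leD)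
  have "\<not> m < F (Suc (M - 1))" unfolding M_def
    by (metis M0 M_def diff_less not_less_Least zero_less_one neq0_conv)
  then show ?thesis using M0 M1 by (intro exI[of _ M]) simp
qed

lemma LB3:
  assumes "3 \<le> M" "F M \<le> m" "m < F (Suc M)"
  shows "LB 3 m = Some [True, False, F M + F (M - 2) \<le> m]"
proof -
  have z: "length (zeck m) = M" "na (zeck m)" "zv (zeck m) = m" "hd (zeck m)"
    using zeck_char[of M m] assms by auto
  obtain x0 x1 x2 rest where xs: "zeck m = x0 # x1 # x2 # rest"
    using z(1) assms(1) by (cases "zeck m" rule: remdups_adj.cases) (auto, metis Suc_le_length_iff list.size(3) numeral_3_eq_3 not_less_eq_eq zero_le)
  have x0: x0 using z(4) xs by simp
  have x1: "\<not> x1" using z(2) xs x0 by simp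
  have nr: "na (x2 # rest)" using z(2) xs by simp
  have len: "length rest = M - 3" using z(1) xs by simp
  have v: "m = F M + zv (x2 # rest)" using z(3) z(1) xs x0 x1 by simp
  have "x2 \<longleftrightarrow> F M + F (M - 2) \<le> m"
  proof
    assume x2
    have "Suc (M - 3) = M - 2" using assms(1) by simp
    then show "F M + F (M - 2) \<le> m" using v len \<open>x2\<close> by simp
  next
    assume H: "F M + F (M - 2) \<le> m"
    show x2
    proof (rule ccontr)
      assume "\<not> x2"
      then have "m = F M + zv rest" using v by simp
      moreover have "zv rest < F (Suc (length rest))" using zv_bound na_tl nr by blast
      moreover have "Suc (length rest) = M - 2" using len assms(1) by simp
      ultimately show False using H by simp
    qed
  qed
  then show ?thesis unfolding LB_def using z(1) assms(1) xs x0 x1 by simp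
qed



definition Cn :: "real \<Rightarrow> nat \<Rightarrow> real \<Rightarrow> real \<Rightarrow> real" where
  "Cn th n w L = real (card {k\<in>{1..n}. frac (real k * th - w) < L})"

lemma Cn_le_n: "Cn th n w L \<le> n"
proof -
  have "card {k\<in>{1..n}. frac (real k * th - w) < L} \<le> card {1..n}"
    by (intro card_mono) auto
  then show ?thesis unfolding Cn_def by simp
qed

lemma Cn_nonneg: "Cn th n w L \<ge> 0"
  unfolding Cn_def by simp

lemma Cn_one: "Cn th n w 1 = n"
proof -
  have "{k\<in>{1..n}. frac (real k * th - w) < 1} = {1..n}" using frac_lt_1 by auto
  then show ?thesis unfolding Cn_def by simp
qed

lemma Cn_mono: "L \<le> L' \<Longrightarrow> Cn th n w L \<le> Cn th n w L'"
  unfolding Cn_def by (intro of_nat_mono card_mono) auto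

lemma frac_shift_split:
  assumes "0 \<le> L1" "L1 \<le> 1" "0 \<le> L2" "L1 + L2 \<le> 1"
  shows "frac t < L1 + L2 \<longleftrightarrow> frac t < L1 \<or> frac (t - L1) < L2"
    and "\<not> (frac t < L1 \<and> frac (t - L1) < L2)"
proof -
  define s where "s = frac t"
  have s: "0 \<le> s" "s < 1" unfolding s_def by (auto simp: frac_lt_1)
  have ts: "t - L1 = (s - L1) + of_int \<lfloor>t\<rfloor>" unfolding s_def frac_def by simp
  have fr: "frac (t - L1) = (if s \<ge> L1 then s - L1 else s - L1 + 1)"
  proof -
    have "frac (t - L1) = frac (s - L1)" unfolding ts by (rule frac_add_of_int_right)
    also have "\<dots> = (if s \<ge> L1 then s - L1 else s - L1 + 1)"
    proof (cases "s \<ge> L1")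
      case True then show ?thesis using s assms by (simp add: frac_eq)
    next
      case False
      have "frac (s - L1) = frac ((s - L1 + 1) + of_int (-1))" by simp
      also have "\<dots> = s - L1 + 1" using False s assms by (subst frac_add_of_int_right) (simp add: frac_eq)
      finally show ?thesis using False by simp
    qed
    finally show ?thesis .
  qed
  show "frac t < L1 + L2 \<longleftrightarrow> frac t < L1 \<or> frac (t - L1) < L2"
    using fr assms s unfolding s_def[symmetric] by auto
  show "\<not> (frac t < L1 \<and> frac (t - L1) < L2)"
    using fr assms s unfolding s_def[symmetric] by auto
qed

lemma Cn_add:
  assumes "0 \<le> L1" "0 \<le> L2" "L1 + L2 \<le> 1"
  shows "Cn th n w (L1 + L2) = Cn th n w L1 + Cn th n (w + L1) L2"
proof -
  have L1: "L1 \<le> 1" using assms by simp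
  have eqx: "\<And>k. real k * th - (w + L1) = (real k * th - w) - L1" by simp
  have eq: "{k\<in>{1..n}. frac (real k * th - w) < L1 + L2} =
     {k\<in>{1..n}. frac (real k * th - w) < L1} \<union> {k\<in>{1..n}. frac (real k * th - (w + L1)) < L2}"
    unfolding eqx using frac_shift_split(1)[OF assms(1) L1 assms(2,3)] by auto
  have disj: "{k\<in>{1..n}. frac (real k * th - w) < L1} \<inter> {k\<in>{1..n}. frac (real k * th - (w + L1)) < L2} = {}"
    unfolding eqx using frac_shift_split(2)[OF assms(1) L1 assms(2,3)] by auto
  show ?thesis unfolding Cn_def eq
    by (subst card_Un_disjoint) (use disj in auto)
qed

lemma Cn_sum:
  assumes "0 \<le> d" "real m * d \<le> 1"
  shows "Cn th n w (real m * d) = (\<Sum>j<m. Cn th n (w + real j * d) d)"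
  using assms(2)
proof (induction m)
  case 0
  have "{k\<in>{1..n}. frac (real k * th - w) < 0} = {}" by (auto simp: not_less)
  then show ?case unfolding Cn_def by simp
next
  case (Suc m)
  have h: "real m * d \<le> 1" using Suc.prems assms(1) by (smt (verit) mult_right_mono of_nat_Suc)
  have "Cn th n w (real (Suc m) * d) = Cn th n w (real m * d + d)" by (simp add: algebra_simps)
  also have "\<dots> = Cn th n w (real m * d) + Cn th n (w + real m * d) d"
    using Suc.prems assms(1) by (intro Cn_add) (auto simp: algebra_simps)
  finally show ?case using Suc.IH[OF h] by simp
qed

lemma Cn_shift:
  fixes q :: nat and th :: real
  defines "d \<equiv> frac (real q * th)"
  shows "\<bar>Cn th n (w + d) L - Cn th n w L\<bar> \<le> q"
proof -
  define Q where "Q j \<longleftrightarrow> frac (real j * th - (w + d)) < L" for j :: nat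
  have PQ: "frac (real k * th - w) < L \<longleftrightarrow> Q (k + q)" for k
  proof -
    have "real (k + q) * th - (w + d) = (real k * th - w) + of_int \<lfloor>real q * th\<rfloor>"
      unfolding d_def frac_def by (simp add: algebra_simps)
    then show ?thesis unfolding Q_def by (simp only: frac_add_of_int_right)
  qed
  define A where "A = {k\<in>{1..n}. frac (real k * th - w) < L}"
  define B where "B = {j\<in>{1..n}. Q j}"
  define A' where "A' = (\<lambda>k. k + q) ` A"
  have cA: "card A' = card A" unfolding A'_def by (intro card_image) (auto simp: inj_on_def)
  have A'eq: "A' = {j\<in>{q+1..n+q}. Q j}"
  proof
    show "A' \<subseteq> {j\<in>{q+1..n+q}. Q j}" unfolding A'_def A_def using PQ by auto
    show "{j\<in>{q+1..n+q}. Q j} \<subseteq> A'"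
    proof
      fix j assume j: "j \<in> {j\<in>{q+1..n+q}. Q j}"
      then have "j - q \<in> A" unfolding A_def using PQ[of "j - q"] by auto
      moreover have "j = (j - q) + q" using j by auto
      ultimately show "j \<in> A'" unfolding A'_def by blast
    qed
  qed
  have s1: "B \<subseteq> A' \<union> {1..q}" unfolding B_def A'eq by auto
  have s2: "A' \<subseteq> B \<union> {n+1..n+q}" unfolding B_def A'eq by auto
  have "card B \<le> card A' + q"
    using card_mono[OF _ s1] card_Un_le[of A' "{1..q}"] by (simp add: A'eq)
  moreover have "card A' \<le> card B + q"
    using card_mono[OF _ s2] card_Un_le[of B "{n+1..n+q}"] by (simp add: B_def)
  moreover have "Cn th n (w + d) L = card B" unfolding Cn_def B_def Q_def by simp
  moreover have "Cn th n w L = card A" unfolding Cn_def A_def by simp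
  ultimately show ?thesis using cA by linarith
qed

lemma Cn_shift_m:
  fixes q :: nat and th :: real
  defines "d \<equiv> frac (real q * th)"
  shows "\<bar>Cn th n (w + real m * d) L - Cn th n w L\<bar> \<le> real m * q"
proof (induction m)
  case 0 then show ?case by simp
next
  case (Suc m)
  have "\<bar>Cn th n (w + real m * d + d) L - Cn th n (w + real m * d) L\<bar> \<le> q"
    unfolding d_def by (rule Cn_shift)
  moreover have "w + real (Suc m) * d = w + real m * d + d" by (simp add: algebra_simps)
  ultimately show ?case using Suc.IH by (simp add: algebra_simps)
qed

lemma Cn_bounds:
  fixes q N K :: nat and th d L w :: real
  assumes d: "d = frac (real q * th)" "0 < d"
    and N: "real N * d \<le> 1" "1 < (real N + 1) * d"
    and K: "real K * d \<le> L" "L < (real K + 1) * d" "L \<le> 1"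
  shows "real K * real n - real K * (real N + 1) * real N * real q \<le> (real N + 1) * Cn th n w L"
    and "real N * Cn th n w L \<le> (real K + 1) * (real n + real N * real N * real q)"
proof -
  have d1: "d < 1" using d frac_lt_1 by simp
  have up: "real N * Cn th n v d \<le> real n + real N * real N * real q" for v
  proof -
    have "(\<Sum>j<N. Cn th n v d - real N * real q) \<le> (\<Sum>j<N. Cn th n (v + real j * d) d)"
    proof (intro sum_mono)
      fix j assume "j \<in> {..<N}"
      then have "real j * real q \<le> real N * real q" by (intro mult_right_mono) auto
      moreover have "\<bar>Cn th n (v + real j * d) d - Cn th n v d\<bar> \<le> real j * q"
        unfolding d(1) by (rule Cn_shift_m)
      ultimately show "Cn th n v d - real N * real q \<le> Cn th n (v + real j * d) d" by linarith
    qed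
    also have "\<dots> = Cn th n v (real N * d)" using Cn_sum[of d N th n v] d N by simp
    also have "\<dots> \<le> n" by (rule Cn_le_n)
    finally show ?thesis by (simp add: algebra_simps)
  qed
  have lo: "real n \<le> (real N + 1) * Cn th n v d + (real N + 1) * real N * real q" for v
  proof -
    have "real n = Cn th n v (real N * d + (1 - real N * d))" using Cn_one by simp
    also have "\<dots> = Cn th n v (real N * d) + Cn th n (v + real N * d) (1 - real N * d)"
      using d N by (intro Cn_add) auto
    also have "\<dots> \<le> Cn th n v (real N * d) + Cn th n (v + real N * d) d"
      using N by (intro add_left_mono Cn_mono) (auto simp: algebra_simps)
    also have "\<dots> = (\<Sum>j<Suc N. Cn th n (v + real j * d) d)"
      using Cn_sum[of d N th n v] d N by simp
    also have "\<dots> \<le> (\<Sum>j<Suc N. Cn th n v d + real N * real q)"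
    proof (intro sum_mono)
      fix j assume "j \<in> {..<Suc N}"
      then have "real j * real q \<le> real N * real q" by (intro mult_right_mono) auto
      moreover have "\<bar>Cn th n (v + real j * d) d - Cn th n v d\<bar> \<le> real j * q"
        unfolding d(1) by (rule Cn_shift_m)
      ultimately show "Cn th n (v + real j * d) d \<le> Cn th n v d + real N * real q" by linarith
    qed
    also have "\<dots> = (real N + 1) * Cn th n v d + (real N + 1) * real N * real q"
      by (simp add: algebra_simps)
    finally show ?thesis .
  qed
  have KL: "real K * d \<le> 1" using K by simp
  have sumK: "Cn th n w (real K * d) = (\<Sum>j<K. Cn th n (w + real j * d) d)"
    using Cn_sum[of d K th n w] d KL by simp
  have "real K * real n - real K * (real N + 1) * real N * real q
      = (\<Sum>j<K. real n - (real N + 1) * real N * real q)" by (simp add: algebra_simps)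
  also have "\<dots> \<le> (\<Sum>j<K. (real N + 1) * Cn th n (w + real j * d) d)"
    using lo by (intro sum_mono) (smt (verit))
  also have "\<dots> = (real N + 1) * Cn th n w (real K * d)" by (simp add: sumK sum_distrib_left)
  also have "\<dots> \<le> (real N + 1) * Cn th n w L"
    using K by (intro mult_left_mono Cn_mono) auto
  finally show "real K * real n - real K * (real N + 1) * real N * real q \<le> (real N + 1) * Cn th n w L" .
  have "Cn th n w L = Cn th n w (real K * d + (L - real K * d))" by simp
  also have "\<dots> = Cn th n w (real K * d) + Cn th n (w + real K * d) (L - real K * d)"
    using d K by (intro Cn_add) auto
  also have "\<dots> \<le> Cn th n w (real K * d) + Cn th n (w + real K * d) d"
    using K by (intro add_left_mono Cn_mono) (auto simp: algebra_simps)
  finally have "real N * Cn th n w L \<le> (\<Sum>j<K. real N * Cn th n (w + real j * d) d) + real N * Cn th n (w + real K * d) d"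
    by (simp add: sumK sum_distrib_left[symmetric] mult_left_mono distrib_left[symmetric])
  also have "\<dots> \<le> (\<Sum>j<K. real n + real N * real N * real q) + (real n + real N * real N * real q)"
    using up by (intro add_mono sum_mono) auto
  also have "\<dots> = (real K + 1) * (real n + real N * real N * real q)" by (simp add: algebra_simps)
  finally show "real N * Cn th n w L \<le> (real K + 1) * (real n + real N * real N * real q)" .
qed

lemma ineq_i:
  fixes K N L d :: real
  assumes "0 < d" "d \<le> 1/2" "L \<le> 1" "0 \<le> L" "L < (K + 1) * d" "(N + 1) * d \<le> 1 + d" "0 \<le> N" "0 \<le> K"
  shows "(L - 2 * d) * (N + 1) \<le> K"
proof (cases "L - 2 * d \<le> 0")
  case True
  then have "(L - 2 * d) * (N + 1) \<le> 0" using assms by (intro mult_nonpos_nonneg) auto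
  then show ?thesis using assms by linarith
next
  case False
  have "(L - 2 * d) * ((N + 1) * d) \<le> (L - 2 * d) * (1 + d)"
    using False assms by (intro mult_left_mono) auto
  also have "\<dots> \<le> L - d"
  proof -
    have "L * d \<le> 1 * d" using assms by (intro mult_right_mono) auto
    moreover have "0 \<le> d * d" by simp
    moreover have "(L - 2 * d) * (1 + d) = L + L * d - 2 * d - 2 * (d * d)" by (simp add: algebra_simps)
    ultimately show ?thesis by linarith
  qed
  also have "\<dots> < K * d" using assms by (simp add: algebra_simps)
  finally have "((L - 2 * d) * (N + 1)) * d < K * d" by (simp add: algebra_simps)
  then show ?thesis using assms by (simp add: mult_less_cancel_right)
qed

lemma ineq_ii:
  fixes K N L d :: real
  assumes "0 < d" "d \<le> 1/2" "L \<le> 1" "0 \<le> L" "K * d \<le> L" "1 < (N + 1) * d" "0 \<le> N" "0 \<le> K"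
  shows "K + 1 \<le> (L + 4 * d) * N"
proof -
  have Nd: "N * d > 1 - d" using assms by (simp add: algebra_simps)
  have "(K + 1) * d \<le> L + d" using assms by (simp add: algebra_simps)
  also have "\<dots> \<le> (L + 4 * d) * (1 - d)"
  proof -
    have a: "L * d \<le> 1 * d" using assms by (intro mult_right_mono) auto
    have b: "d * d \<le> (1/2) * d" using assms by (intro mult_right_mono) auto
    have "L * d + 4 * d * d \<le> 3 * d" using a b by linarith
    then show ?thesis by (simp add: algebra_simps)
  qed
  also have "\<dots> \<le> (L + 4 * d) * (N * d)" using Nd assms by (intro mult_left_mono) auto
  finally have "(K + 1) * d \<le> ((L + 4 * d) * N) * d" by (simp add: algebra_simps)
  then show ?thesis using assms by simp
qed

lemma Cn_limit:
  assumes th: "th \<notin> \<rat>" and L: "0 \<le> L" "L \<le> 1"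
  shows "(\<lambda>n. Cn th n w L / real n) \<longlonglongrightarrow> L"
proof (rule LIMSEQ_I)
  fix r :: real assume r: "0 < r"
  define eta where "eta = min (r / 8) (1/2)"
  have eta: "0 < eta" "eta \<le> r / 8" "eta \<le> 1/2" using r by (auto simp: eta_def)
  obtain q where q: "q > 0" "\<bar>frac (real q * th) - 0\<bar> < eta"
    using Kronecker_approx_1_explicit[OF th _ _ eta(1), of 0] by auto
  define d where "d = frac (real q * th)"
  have dnz: "real q * th \<notin> \<int>"
  proof
    assume "real q * th \<in> \<int>"
    then have "real q * th \<in> \<rat>" using Ints_subset_Rats by blast
    then have "(real q * th) / real q \<in> \<rat>" by (intro Rats_divide) auto
    then show False using th q(1) by simp
  qed
  have d: "0 < d" "d < eta" using q dnz unfolding d_def by auto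
  define N where "N = nat \<lfloor>1 / d\<rfloor>"
  define K where "K = nat \<lfloor>L / d\<rfloor>"
  have N1: "real N \<le> 1 / d" "1 / d < real N + 1" unfolding N_def using d
    by (auto simp: of_nat_nat)
  have K1: "real K \<le> L / d" "L / d < real K + 1" unfolding K_def using d L
    by (auto simp: of_nat_nat)
  have N2: "real N * d \<le> 1" "1 < (real N + 1) * d" using N1 d by (auto simp: field_simps)
  have K2: "real K * d \<le> L" "L < (real K + 1) * d" using K1 d by (auto simp: field_simps)
  have "2 * d < 1" using d eta by linarith
  then have "2 < 1 / d" using d by (simp add: field_simps)
  then have Npos: "real N > 0" using N1 by linarith
  have i: "(L - 2 * d) * (real N + 1) \<le> real K"
    using d eta L K2 N2 by (intro ineq_i) (auto simp: algebra_simps)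
  have ii: "real K + 1 \<le> (L + 4 * d) * real N"
    using d eta L K2 N2 by (intro ineq_ii) auto
  define E where "E = (real K + 1) * real N * real q"
  have E0: "E \<ge> 0" unfolding E_def by simp
  define no where "no = nat \<lceil>2 * E / r\<rceil> + 1"
  show "\<exists>no. \<forall>n\<ge>no. norm (Cn th n w L / real n - L) < r"
  proof (intro exI[of _ no] allI impI)
    fix n assume n: "no \<le> n"
    have npos: "real n > 0" using n unfolding no_def by simp
    have nE: "2 * E / r < real n" using n unfolding no_def by linarith
    then have nE': "E / real n < r / 2" using npos r by (simp add: field_simps)
    note B = Cn_bounds[OF d_def d(1) N2 K2 L(2), of n w]
    have low: "(L - 2 * d) * real n - E \<le> Cn th n w L"
    proof -
      have "(L - 2 * d) * (real N + 1) * real n \<le> real K * real n"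
        using i by (intro mult_right_mono) auto
      also have "\<dots> \<le> (real N + 1) * Cn th n w L + real K * (real N + 1) * real N * real q"
        using B(1) by linarith
      also have "real K * (real N + 1) * real N * real q \<le> (real N + 1) * E"
        unfolding E_def using Npos by (simp add: algebra_simps)
      finally have "(real N + 1) * ((L - 2 * d) * real n - E) \<le> (real N + 1) * Cn th n w L"
        by (simp add: algebra_simps)
      then show ?thesis using Npos by (simp add: mult_le_cancel_left_pos)
    qed
    have upp: "Cn th n w L \<le> (L + 4 * d) * real n + E"
    proof -
      have "real N * Cn th n w L \<le> (real K + 1) * real n + (real K + 1) * real N * real N * real q"
        using B(2) by (simp add: algebra_simps)
      also have "\<dots> \<le> (L + 4 * d) * real N * real n + real N * E"
      proof -
        have "(real K + 1) * real n \<le> ((L + 4 * d) * real N) * real n"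
          using ii by (intro mult_right_mono) auto
        moreover have "(real K + 1) * real N * real N * real q = real N * E"
          unfolding E_def by (simp add: algebra_simps)
        ultimately show ?thesis by linarith
      qed
      finally have "real N * Cn th n w L \<le> real N * ((L + 4 * d) * real n + E)"
        by (simp add: algebra_simps)
      then show ?thesis using Npos by (simp add: mult_le_cancel_left_pos)
    qed
    have "L - 2 * d - E / real n = ((L - 2 * d) * real n - E) / real n" using npos by (simp add: field_simps)
    also have "\<dots> \<le> Cn th n w L / real n" using low npos by (intro divide_right_mono) auto
    finally have g1: "Cn th n w L / real n \<ge> L - 2 * d - E / real n" .
    have "Cn th n w L / real n \<le> ((L + 4 * d) * real n + E) / real n"
      using upp npos by (intro divide_right_mono) auto
    also have "\<dots> = L + 4 * d + E / real n" using npos by (simp add: field_simps)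
    finally have g2: "Cn th n w L / real n \<le> L + 4 * d + E / real n" .
    show "norm (Cn th n w L / real n - L) < r"
      using g1 g2 nE' d eta by (simp only: real_norm_def abs_less_iff) linarith
  qed
qed



definition psi :: real where "psi = (1 - sqrt 5) / 2"

lemma sqrt5_bounds: "2 < sqrt 5" "sqrt 5 < 3"
proof -
  show "2 < sqrt 5" by (rule real_less_rsqrt) simp
  show "sqrt 5 < 3" by (rule real_less_lsqrt) simp_all
qed

lemma phi_gt1: "phi > 1" and phi_lt2: "phi < 2" and phi_pos: "phi > 0"
  using sqrt5_bounds unfolding phi_def by auto

lemma phi_sq: "phi ^ 2 = phi + 1"
  unfolding phi_def by (simp add: power2_eq_square field_simps)

lemma psi_sq: "psi ^ 2 = psi + 1"
  unfolding psi_def by (simp add: power2_eq_square field_simps)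

lemma psi_bounds: "-1 < psi" "psi < 0"
  using sqrt5_bounds unfolding psi_def by auto

lemma F_binet: "real (F n) = (phi ^ Suc n - psi ^ Suc n) / sqrt 5"
proof (induction n rule: F.induct)
  case 1 then show ?case unfolding phi_def psi_def by (simp add: field_simps)
next
  case 2 then show ?case using phi_sq psi_sq unfolding phi_def psi_def by (simp add: field_simps)
next
  case 3
  have "phi ^ 3 = 2 * phi + 1" using phi_sq by (simp add: power3_eq_cube power2_eq_square algebra_simps)
  moreover have "psi ^ 3 = 2 * psi + 1" using psi_sq by (simp add: power3_eq_cube power2_eq_square algebra_simps)
  ultimately show ?case unfolding phi_def psi_def by (simp add: field_simps numeral_3_eq_3[symmetric])
next
  case (4 n)
  have "real (F (Suc (Suc (Suc n)))) = real (F (Suc (Suc n))) + real (F (Suc n))"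
    using F_rec[of "Suc n"] by simp
  also have "\<dots> = (phi ^ Suc n * (phi ^ 2 + phi) - psi ^ Suc n * (psi ^ 2 + psi)) / sqrt 5"
    using 4 by (simp add: field_simps power2_eq_square)
  also have "phi ^ 2 + phi = phi ^ 3" using phi_sq by (simp add: power3_eq_cube power2_eq_square algebra_simps)
  also have "psi ^ 2 + psi = psi ^ 3" using psi_sq by (simp add: power3_eq_cube power2_eq_square algebra_simps)
  finally show ?case by (simp add: power3_eq_cube mult_ac)
qed

lemma sqrt5_irrat: "sqrt 5 \<notin> \<rat>"
proof
  assume "sqrt 5 \<in> \<rat>"
  then obtain m n :: nat where n: "n \<noteq> 0" and mn: "\<bar>sqrt 5\<bar> = real m / real n" and cop: "coprime m n"
    by (rule Rats_abs_nat_div_natE)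
  have "real m = sqrt 5 * real n" using mn n by (simp add: field_simps)
  then have "real m ^ 2 = 5 * real n ^ 2" by (simp add: power_mult_distrib)
  then have eq: "m ^ 2 = 5 * n ^ 2" by (metis of_nat_eq_iff of_nat_mult of_nat_numeral of_nat_power)
  have d5: "5 dvd x" if "x ^ 2 = 5 * y ^ 2" for x y :: nat
  proof -
    have "(x * x) mod 5 = 0" using that by (simp add: power2_eq_square)
    then have "((x mod 5) * (x mod 5)) mod 5 = 0" by (metis mod_mult_eq)
    moreover have "x mod 5 < 5" by simp
    ultimately have "x mod 5 = 0"
      by (cases "x mod 5"; cases "x mod 5 - 1"; cases "x mod 5 - 2"; cases "x mod 5 - 3"; cases "x mod 5 - 4") auto
    then show ?thesis by auto
  qed
  have "5 dvd m" using d5 eq by blast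
  then obtain k where k: "m = 5 * k" by blast
  then have "n ^ 2 = 5 * k ^ 2" using eq by (simp add: power_mult_distrib)
  then have "5 dvd n" using d5 by blast
  then show False using coprime_common_divisor_nat[OF cop \<open>5 dvd m\<close>] by simp
qed

lemma phi_pow: "phi ^ Suc (Suc n) = real (F (Suc n)) * phi + real (F n)"
proof (induction n)
  case 0 then show ?case using phi_sq by (simp add: power2_eq_square)
next
  case (Suc n)
  have "phi ^ Suc (Suc (Suc n)) = phi * (real (F (Suc n)) * phi + real (F n))"
    using Suc by simp
  also have "\<dots> = real (F (Suc n)) * (phi ^ 2) + real (F n) * phi" by (simp add: algebra_simps power2_eq_square)
  also have "\<dots> = real (F (Suc (Suc n))) * phi + real (F (Suc n))"
    using F_rec[of n] phi_sq by (simp add: algebra_simps)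
  finally show ?case .
qed

lemma phi_irrat: "phi \<notin> \<rat>"
proof
  assume "phi \<in> \<rat>"
  then have "2 * phi - 1 \<in> \<rat>" by simp
  moreover have "2 * phi - 1 = sqrt 5" unfolding phi_def by (simp add: field_simps)
  ultimately show False using sqrt5_irrat by simp
qed

lemma theta_irrat:
  fixes a :: nat assumes "a > 1"
  shows "log phi (real a) \<notin> \<rat>"
proof
  define th where "th = log phi (real a)"
  assume "log phi (real a) \<in> \<rat>"
  then have "th \<in> \<rat>" unfolding th_def .
  then obtain m n :: nat where n: "n \<noteq> 0" and mn: "\<bar>th\<bar> = real m / real n"
    by (rule Rats_abs_nat_div_natE)
  have thpos: "th > 0" unfolding th_def using assms phi_gt1 by simp
  then have thmn: "th * real n = real m" using mn n by (simp add: field_simps)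
  have "real (a ^ n) = (phi powr th) ^ n" unfolding th_def using assms phi_gt1 by simp
  also have "\<dots> = (phi powr th) powr (real n)" using phi_pos by (simp add: powr_realpow)
  also have "\<dots> = phi powr real m" by (simp add: powr_powr thmn)
  also have "\<dots> = phi ^ m" using phi_pos by (simp add: powr_realpow)
  finally have e1: "real (a ^ n) = phi ^ m" .
  have "th * real n > 0" using thpos n by simp
  then have "m \<noteq> 0" using thmn by auto
  then obtain p where p: "m + m = Suc (Suc p)" by (cases m) auto
  have "real (a ^ (n + n)) = phi ^ (m + m)" using e1 by (simp add: power_add)
  then have "real (a ^ (n + n)) = real (F (Suc p)) * phi + real (F p)" using p phi_pow by simp
  moreover have "real (F (Suc p)) > 0" using F_pos[of "Suc p"] by simp
  ultimately have "phi = (real (a ^ (n + n)) - real (F p)) / real (F (Suc p))"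
    by (simp add: field_simps)
  moreover have "(real (a ^ (n + n)) - real (F p)) / real (F (Suc p)) \<in> \<rat>" by simp
  ultimately show False using phi_irrat by simp
qed

lemma log_shift:
  assumes "x > 0"
  shows "log phi x - real k + log phi (sqrt 5) = log phi (x * sqrt 5 / phi ^ k)"
proof -
  have "log phi (x * sqrt 5 / phi ^ k) = log phi x + log phi (sqrt 5) - log phi (phi ^ k)"
    using assms phi_pos by (simp add: log_mult log_divide)
  also have "log phi (phi ^ k) = real k" using phi_gt1 by simp
  finally show ?thesis by simp
qed

lemma rho_lim: "(\<lambda>j. (psi / phi) ^ (j + c)) \<longlonglongrightarrow> 0"
proof -
  have "\<bar>psi / phi\<bar> < 1" using psi_bounds phi_gt1 by (simp add: abs_if field_simps)
  then have "(\<lambda>j. (psi / phi) ^ j) \<longlonglongrightarrow> 0" by (intro LIMSEQ_power_zero) simp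
  then have "(\<lambda>j. (psi / phi) ^ c * (psi / phi) ^ j) \<longlonglongrightarrow> (psi / phi) ^ c * 0"
    by (intro tendsto_mult tendsto_const)
  then show ?thesis by (simp add: power_add mult.commute)
qed

lemma r1_eq: "real (F j) * sqrt 5 / phi ^ (j + 1) = 1 - (psi / phi) ^ (j + 1)"
proof -
  have "real (F j) * sqrt 5 = phi ^ (j + 1) - psi ^ (j + 1)" by (simp add: F_binet)
  moreover have "phi ^ (j + 1) \<noteq> 0" using phi_pos by simp
  ultimately show ?thesis by (simp add: diff_divide_distrib power_divide)
qed

lemma r1_eq2: "real (F (j + 2)) * sqrt 5 / phi ^ (j + 3) = 1 - (psi / phi) ^ (j + 3)"
proof -
  have e: "j + 2 + 1 = j + 3" by simp
  show ?thesis using r1_eq[of "j + 2", unfolded e] .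
qed

lemma log_lim:
  assumes "r \<longlonglongrightarrow> c" "c > 0"
  shows "(\<lambda>j. log phi (r j)) \<longlonglongrightarrow> log phi c"
  using tendsto_log[OF tendsto_const assms(1), of phi] phi_gt1 assms(2) by simp

lemma g1_lim: "(\<lambda>j. log phi (real (F (j + 2))) - real (j + 3) + log phi (sqrt 5)) \<longlonglongrightarrow> 0"
proof -
  have e: "log phi (real (F (j + 2))) - real (j + 3) + log phi (sqrt 5) = log phi (1 - (psi / phi) ^ (j + 3))" for j
  proof -
    have "real (F (j + 2)) > 0" using F_pos[of "j+2"] by simp
    then have "log phi (real (F (j + 2))) - real (j + 3) + log phi (sqrt 5) = log phi (real (F (j + 2)) * sqrt 5 / phi ^ (j + 3))"
      by (rule log_shift)
    then show ?thesis by (simp only: r1_eq2)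
  qed
  have "(\<lambda>j. 1 - (psi / phi) ^ (j + 3)) \<longlonglongrightarrow> 1 - 0" by (intro tendsto_diff tendsto_const rho_lim)
  then have "(\<lambda>j. log phi (1 - (psi / phi) ^ (j + 3))) \<longlonglongrightarrow> log phi (1 - 0)"
    by (rule log_lim) simp
  then show ?thesis unfolding e by simp
qed

lemma g2_lim: "(\<lambda>j. log phi (real (F (j + 2)) + real (F j)) - real (j + 3) + log phi (sqrt 5)) \<longlonglongrightarrow> log phi (1 + phi powr (-2))"
proof -
  have pp: "phi powr (-2) = 1 / phi ^ 2"
  proof -
    have "phi powr (-2) = inverse (phi powr real 2)" by (simp add: powr_minus)
    also have "phi powr real 2 = phi ^ 2" using phi_pos by (rule powr_realpow)
    finally show ?thesis by (simp add: divide_inverse)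
  qed
  have r: "(real (F (j + 2)) + real (F j)) * sqrt 5 / phi ^ (j + 3) = (1 - (psi / phi) ^ (j + 3)) + (1 - (psi / phi) ^ (j + 1)) / phi ^ 2" for j
  proof -
    have j3: "j + 3 = (j + 1) + 2" by simp
    have p3: "phi ^ (j + 3) = phi ^ (j + 1) * phi ^ 2"
      unfolding j3 by (rule power_add)
    have "(real (F (j + 2)) + real (F j)) * sqrt 5 / phi ^ (j + 3) = real (F (j + 2)) * sqrt 5 / phi ^ (j + 3) + real (F j) * sqrt 5 / phi ^ (j + 3)"
      by (simp add: add_divide_distrib distrib_right)
    also have "real (F j) * sqrt 5 / phi ^ (j + 3) = (real (F j) * sqrt 5 / phi ^ (j + 1)) / phi ^ 2"
      unfolding p3 by simp
    finally show ?thesis by (simp only: r1_eq2 r1_eq)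
  qed
  have e: "log phi (real (F (j + 2)) + real (F j)) - real (j + 3) + log phi (sqrt 5) = log phi ((1 - (psi / phi) ^ (j + 3)) + (1 - (psi / phi) ^ (j + 1)) / phi ^ 2)" for j
  proof -
    have "real (F (j + 2)) + real (F j) > 0" using F_pos[of "j+2"] by simp
    then have "log phi (real (F (j + 2)) + real (F j)) - real (j + 3) + log phi (sqrt 5) = log phi ((real (F (j + 2)) + real (F j)) * sqrt 5 / phi ^ (j + 3))"
      by (rule log_shift)
    then show ?thesis by (simp only: r)
  qed
  have "(\<lambda>j. (1 - (psi / phi) ^ (j + 3)) + (1 - (psi / phi) ^ (j + 1)) / phi ^ 2) \<longlonglongrightarrow> (1 - 0) + (1 - 0) / phi ^ 2"
    by (intro tendsto_add tendsto_divide tendsto_diff tendsto_const rho_lim) (use phi_pos in simp)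
  then have "(\<lambda>j. log phi ((1 - (psi / phi) ^ (j + 3)) + (1 - (psi / phi) ^ (j + 1)) / phi ^ 2)) \<longlonglongrightarrow> log phi ((1 - 0) + (1 - 0) / phi ^ 2)"
  proof (rule log_lim)
    have "0 \<le> 1 / phi ^ 2" by simp
    then show "0 < (1 - 0) + (1 - 0) / phi ^ 2" unfolding diff_zero by linarith
  qed
  then show ?thesis unfolding e pp by simp
qed



lemma beta_bounds: "0 < log phi (1 + phi powr (-2))" "log phi (1 + phi powr (-2)) < 1"
proof -
  have pp: "phi powr (-2) = 1 / phi ^ 2"
  proof -
    have "phi powr (-2) = inverse (phi powr real 2)" by (simp add: powr_minus)
    also have "phi powr real 2 = phi ^ 2" using phi_pos by (rule powr_realpow)
    finally show ?thesis by (simp add: divide_inverse)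
  qed
  have g0: "phi powr (-2) > 0" using phi_pos by simp
  have h1: "1 < 1 + phi powr (-2)" "0 < 1 + phi powr (-2)" using g0 by linarith+
  show "0 < log phi (1 + phi powr (-2))" using zero_less_log_cancel_iff[OF phi_gt1 h1(2)] h1(1) by blast
  have "1 / phi ^ 2 < phi - 1"
  proof -
    have e: "phi * (phi - 1) = 1" using phi_sq by (simp add: power2_eq_square algebra_simps)
    have "1 < phi * (phi - 1) * phi" unfolding e using phi_gt1 by simp
    then have "1 < (phi - 1) * phi ^ 2" by (simp add: power2_eq_square mult_ac)
    moreover have "phi ^ 2 > 0" using phi_pos by simp
    ultimately show ?thesis by (simp add: divide_less_eq)
  qed
  then have "1 + phi powr (-2) < phi" unfolding pp by simp
  then have "log phi (1 + phi powr (-2)) < log phi phi" using log_less_cancel_iff[OF phi_gt1 h1(2) phi_pos] by simp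
  then show "log phi (1 + phi powr (-2)) < 1" using phi_gt1 by simp
qed

lemma LB3_ge:
  assumes "m \<ge> 1" "LB 3 m \<noteq> None"
  obtains j where "1 \<le> j" "F (j + 2) \<le> m" "m < F (j + 3)" "LB 3 m = Some [True, False, F (j + 2) + F j \<le> m]"
proof -
  obtain M where M: "1 \<le> M" "F M \<le> m" "m < F (Suc M)" using F_bracket assms(1) by blast
  have len: "length (zeck m) = M" using zeck_char[OF M] by simp
  have "M \<ge> 3"
  proof (rule ccontr)
    assume "\<not> M \<ge> 3"
    then have "LB 3 m = None" unfolding LB_def using len by simp
    then show False using assms(2) by simp
  qed
  define j where "j = M - 2"
  have j: "M = j + 2" "1 \<le> j" unfolding j_def using \<open>M \<ge> 3\<close> by auto
  have "LB 3 m = Some [True, False, F M + F (M - 2) \<le> m]" using LB3[OF \<open>M \<ge> 3\<close> M(2,3)] .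
  moreover have "Suc M = j + 3" using j by simp
  ultimately have h: "LB 3 m = Some [True, False, F (j + 2) + F j \<le> m]" "m < F (j + 3)" "F (j + 2) \<le> m"
    using j M by (metis diff_add_inverse2)+
  show ?thesis using that[OF j(2) h(3) h(2) h(1)] .
qed

lemma sandwich:
  fixes a :: nat and eps :: real
  assumes a: "a > 1" and eps: "0 < eps" "log phi (1 + phi powr (-2)) + 2 * eps \<le> 1"
  defines "th \<equiv> log phi (real a)" and "s5 \<equiv> log phi (sqrt 5)" and "bt \<equiv> log phi (1 + phi powr (-2))"
  shows "\<exists>K. \<forall>k\<ge>K. (frac (real k * th - (3 - s5 + eps)) < bt - 2 * eps \<longrightarrow> LB 3 (a ^ k) = Some [True, False, False])
                  \<and> (LB 3 (a ^ k) = Some [True, False, False] \<longrightarrow> frac (real k * th - (3 - s5 - eps)) < bt + 2 * eps)"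
proof -
  define g1 where "g1 j = log phi (real (F (j + 2))) - real (j + 3) + s5" for j
  define g2 where "g2 j = log phi (real (F (j + 2)) + real (F j)) - real (j + 3) + s5" for j
  obtain J0a where J0a: "\<forall>j\<ge>J0a. norm (g1 j - 0) < eps"
    using LIMSEQ_D[OF g1_lim eps(1)] unfolding g1_def s5_def by blast
  obtain J0b where J0b: "\<forall>j\<ge>J0b. norm (g2 j - bt) < eps"
    using LIMSEQ_D[OF g2_lim eps(1)] unfolding g2_def s5_def bt_def by blast
  define J1 where "J1 = max (max J0a J0b) 1"
  have J1: "J0a \<le> J1" "J0b \<le> J1" "1 \<le> J1" unfolding J1_def by auto
  have thpos: "th > 0" unfolding th_def using a phi_gt1 by simp
  obtain K1 :: nat where K1: "real J1 + 4 + \<bar>s5\<bar> + eps < real K1 * th"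
    using ex_less_of_nat_mult[OF thpos] by blast
  define K2 where "K2 = F (J1 + 3)"
  show ?thesis
  proof (intro exI[of _ "max K1 K2"] allI impI conjI)
    fix k assume k: "max K1 K2 \<le> k"
    have logak: "log phi (real (a ^ k)) = real k * th"
      unfolding th_def by (simp add: log_nat_power)
    have akpos: "real (a ^ k) > 0" using a by simp
    have "real K1 * th \<le> real k * th" using k thpos by (intro mult_right_mono) auto
    then have kth: "real J1 + 4 + \<bar>s5\<bar> + eps < real k * th" using K1 by linarith
    have "k < 2 ^ k" by simp
    also have "(2::nat) ^ k \<le> a ^ k" using a by (intro power_mono) auto
    finally have kak: "k < a ^ k" .
    {
      assume H: "frac (real k * th - (3 - s5 + eps)) < bt - 2 * eps"
      define z where "z = real k * th - (3 - s5 + eps)"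
      have zJ1: "real J1 \<le> z" unfolding z_def using kth by linarith
      define j where "j = nat \<lfloor>z\<rfloor>"
      have "int J1 \<le> \<lfloor>z\<rfloor>" using zJ1 by (simp add: le_floor_iff)
      then have jJ: "J1 \<le> j" and jz: "real j = of_int \<lfloor>z\<rfloor>" unfolding j_def by auto
      have fz: "frac z = z - real j" unfolding frac_def jz by simp
      have g1j: "\<bar>g1 j\<bar> < eps" using J0a jJ J1 by auto
      have g2j: "\<bar>g2 j - bt\<bar> < eps" using J0b jJ J1 by auto
      have Fp: "real (F (j + 2)) > 0" using F_pos[of "j + 2"] by simp
      have "log phi (real (F (j + 2))) < log phi (real (a ^ k))"
        using g1j fz H frac_ge_0[of z] unfolding logak g1_def z_def by simp
      then have lo: "F (j + 2) \<le> a ^ k" using Fp akpos phi_gt1 by simp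
      have "log phi (real (a ^ k)) < log phi (real (F (j + 2)) + real (F j))"
        using g2j fz H unfolding logak g2_def z_def by simp
      then have hi: "a ^ k < F (j + 2) + F j" using Fp akpos phi_gt1
        by (metis log_less_cancel_iff of_nat_0_less_iff of_nat_add of_nat_less_iff add_pos_nonneg of_nat_0_le_iff)
      have "F (j + 2) + F j \<le> F (Suc (j + 2))"
        using F_rec[of "Suc j"] F_mono[of j "Suc j"] by simp
      then have hi2: "a ^ k < F (Suc (j + 2))" using hi by linarith
      have "LB 3 (a ^ k) = Some [True, False, F (j + 2) + F (j + 2 - 2) \<le> a ^ k]"
        using jJ J1 by (intro LB3 lo hi2) auto
      then show "LB 3 (a ^ k) = Some [True, False, False]" using hi by simp
    }
    {
      assume P: "LB 3 (a ^ k) = Some [True, False, False]"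
      have "a ^ k \<ge> 1" using a by simp
      then obtain j where j: "1 \<le> j" "F (j + 2) \<le> a ^ k" "a ^ k < F (j + 3)"
        "LB 3 (a ^ k) = Some [True, False, F (j + 2) + F j \<le> a ^ k]"
        using LB3_ge P by blast
      have hi: "a ^ k < F (j + 2) + F j" using j(4) P by simp
      have jJ: "J1 \<le> j"
      proof (rule ccontr)
        assume "\<not> J1 \<le> j"
        then have "F (j + 3) \<le> F (J1 + 3)" by (intro F_mono) simp
        then have "F (j + 3) \<le> k" using k unfolding K2_def by simp
        then show False using j(3) kak by simp
      qed
      have g1j: "\<bar>g1 j\<bar> < eps" using J0a jJ J1 by auto
      have g2j: "\<bar>g2 j - bt\<bar> < eps" using J0b jJ J1 by auto
      have Fp: "real (F (j + 2)) > 0" using F_pos[of "j + 2"] by simp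
      have "log phi (real (F (j + 2))) \<le> log phi (real (a ^ k))" using j(2) Fp akpos phi_gt1 by simp
      then have l1: "g1 j + real (j + 3) - s5 \<le> real k * th" unfolding g1_def logak by simp
      have "real (a ^ k) < real (F (j + 2)) + real (F j)" using hi by linarith
      then have "log phi (real (a ^ k)) < log phi (real (F (j + 2)) + real (F j))"
        using Fp akpos phi_gt1 by (subst log_less_cancel_iff) auto
      then have l2: "real k * th < g2 j + real (j + 3) - s5" unfolding g2_def logak by simp
      define z where "z = real k * th - (3 - s5 - eps)"
      have z1: "real j \<le> z" unfolding z_def using l1 g1j by simp
      have z2: "z < real j + bt + 2 * eps" unfolding z_def using l2 g2j by simp
      have "frac z = z - real j"
        unfolding frac_unique_iff using z1 z2 eps by (simp add: bt_def)
      then show "frac (real k * th - (3 - s5 - eps)) < bt + 2 * eps" using z2 unfolding z_def by simp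
    }
  qed
qed

lemma count_le:
  assumes "\<forall>k\<ge>K. Q k \<longrightarrow> P k"
  shows "card {k\<in>{1..n}. Q k} \<le> card {k\<in>{1..n}. P k} + K"
proof -
  have "{k\<in>{1..n}. Q k} \<subseteq> {k\<in>{1..n}. P k} \<union> {..<K}" using assms by auto
  then have "card {k\<in>{1..n}. Q k} \<le> card ({k\<in>{1..n}. P k} \<union> {..<K})" by (intro card_mono) auto
  also have "\<dots> \<le> card {k\<in>{1..n}. P k} + card {..<K}" by (rule card_Un_le)
  finally show ?thesis by simp
qed

lemma LB_cases:
  assumes "m \<ge> 3"
  shows "LB 3 m = Some [True, False, False] \<or> LB 3 m = Some [True, False, True]"
proof -
  have "m \<ge> 1" using assms by simp
  then obtain M where M: "1 \<le> M" "F M \<le> m" "m < F (Suc M)" using F_bracket by blast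
  have "M \<ge> 3"
  proof (rule ccontr)
    assume "\<not> M \<ge> 3"
    then have "F (Suc M) \<le> F 3" by (intro F_mono) simp
    moreover have "F 3 = 3" by (simp add: numeral_3_eq_3 F_rec)
    ultimately show False using M(3) assms by simp
  qed
  then show ?thesis using LB3[OF _ M(2,3)] by (cases "F M + F (M - 2) \<le> m") auto
qed

theorem lim100:
  fixes a :: nat
  assumes a: "a > 1"
  shows "(\<lambda>n. real (card {k \<in> {1..n}. LB 3 (a ^ k) = Some [True, False, False]}) / real n)
           \<longlonglongrightarrow> log phi (1 + phi powr (-2))"
proof (rule LIMSEQ_I)
  fix r :: real assume r: "0 < r"
  define th where "th = log phi (real a)"
  define s5 where "s5 = log phi (sqrt 5)"
  define bt where "bt = log phi (1 + phi powr (-2))"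
  have bt: "0 < bt" "bt < 1" unfolding bt_def using beta_bounds by auto
  define eps where "eps = min (r / 4) (min (bt / 4) ((1 - bt) / 4))"
  have eps: "0 < eps" "eps \<le> r / 4" "eps \<le> bt / 4" "eps \<le> (1 - bt) / 4" using r bt unfolding eps_def by (auto simp: min_def)
  have e4: "4 * eps \<le> 1 - bt" "4 * eps \<le> bt" using eps(3,4) by (simp_all add: field_simps)
  have "bt + 2 * eps \<le> 1" using e4 eps bt by linarith
  then obtain K where K: "\<forall>k\<ge>K. (frac (real k * th - (3 - s5 + eps)) < bt - 2 * eps \<longrightarrow> LB 3 (a ^ k) = Some [True, False, False])
                  \<and> (LB 3 (a ^ k) = Some [True, False, False] \<longrightarrow> frac (real k * th - (3 - s5 - eps)) < bt + 2 * eps)"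
    using sandwich[OF a eps(1)] unfolding th_def s5_def bt_def by blast
  define A where "A n = card {k \<in> {1..n}. LB 3 (a ^ k) = Some [True, False, False]}" for n
  have A1: "Cn th n (3 - s5 + eps) (bt - 2 * eps) \<le> real (A n) + real K" for n
  proof -
    have c: "card {k\<in>{1..n}. frac (real k * th - (3 - s5 + eps)) < bt - 2 * eps} \<le> A n + K"
      unfolding A_def by (rule count_le) (use K in blast)
    show ?thesis unfolding Cn_def using of_nat_mono[OF c, where 'a=real] by simp
  qed
  have A2: "real (A n) \<le> Cn th n (3 - s5 - eps) (bt + 2 * eps) + real K" for n
  proof -
    have c: "A n \<le> card {k\<in>{1..n}. frac (real k * th - (3 - s5 - eps)) < bt + 2 * eps} + K"
      unfolding A_def by (rule count_le) (use K in blast)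
    show ?thesis unfolding Cn_def using of_nat_mono[OF c, where 'a=real] by simp
  qed
  have thirr: "th \<notin> \<rat>" unfolding th_def using theta_irrat[OF a] .
  have L1: "0 \<le> bt - 2 * eps" "bt - 2 * eps \<le> 1" using e4 eps bt by linarith+
  have L2: "0 \<le> bt + 2 * eps" "bt + 2 * eps \<le> 1" using e4 eps bt by linarith+
  have r4: "r / 4 > 0" using r by simp
  obtain n1 where n1: "\<forall>n\<ge>n1. norm (Cn th n (3 - s5 + eps) (bt - 2 * eps) / real n - (bt - 2 * eps)) < r / 4"
    using LIMSEQ_D[OF Cn_limit[OF thirr L1] r4] by blast
  obtain n2 where n2: "\<forall>n\<ge>n2. norm (Cn th n (3 - s5 - eps) (bt + 2 * eps) / real n - (bt + 2 * eps)) < r / 4"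
    using LIMSEQ_D[OF Cn_limit[OF thirr L2] r4] by blast
  obtain n3 where n3: "\<forall>n\<ge>n3. norm (real K / real n - 0) < r / 4"
    using LIMSEQ_D[OF lim_const_over_n r4] by blast
  show "\<exists>no. \<forall>n\<ge>no. norm (real (A n) / real n - bt) < r"
  proof (intro exI[of _ "max (max n1 n2) (max n3 1)"] allI impI)
    fix n assume n: "max (max n1 n2) (max n3 1) \<le> n"
    have np: "real n > 0" using n by simp
    have c1: "\<bar>Cn th n (3 - s5 + eps) (bt - 2 * eps) / real n - (bt - 2 * eps)\<bar> < r / 4" using n1 n by simp
    have c2: "\<bar>Cn th n (3 - s5 - eps) (bt + 2 * eps) / real n - (bt + 2 * eps)\<bar> < r / 4" using n2 n by simp
    have c3: "\<bar>real K / real n\<bar> < r / 4" using n3 n by simp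
    have "Cn th n (3 - s5 + eps) (bt - 2 * eps) / real n - real K / real n \<le> real (A n) / real n"
      using A1[of n] np by (simp add: diff_divide_distrib[symmetric] divide_right_mono)
    moreover have "real (A n) / real n \<le> Cn th n (3 - s5 - eps) (bt + 2 * eps) / real n + real K / real n"
      using A2[of n] np by (simp add: add_divide_distrib[symmetric] divide_right_mono)
    ultimately show "norm (real (A n) / real n - bt) < r"
      using c1 c2 c3 eps by (simp only: real_norm_def abs_less_iff) linarith
  qed
qed

theorem theorem1p3:
  fixes a :: nat
  assumes "a > 1"
  shows "((\<lambda>n. real (card {k \<in> {1..n}. LB 3 (a ^ k) = Some [True, False, False]}) / real n)
           \<longlonglongrightarrow> log phi (1 + phi powr (-2))) \<and>
         ((\<lambda>n. real (card {k \<in> {1..n}. LB 3 (a ^ k) = Some [True, False, True]}) / real n)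
           \<longlonglongrightarrow> log phi (phi / (1 + phi powr (-2))))"
proof
  show l1: "(\<lambda>n. real (card {k \<in> {1..n}. LB 3 (a ^ k) = Some [True, False, False]}) / real n)
           \<longlonglongrightarrow> log phi (1 + phi powr (-2))" using lim100[OF assms] .
  define bt where "bt = log phi (1 + phi powr (-2))"
  define A where "A n = card {k \<in> {1..n}. LB 3 (a ^ k) = Some [True, False, False]}" for n
  define B where "B n = card {k \<in> {1..n}. LB 3 (a ^ k) = Some [True, False, True]}" for n
  have AB: "real n - 1 \<le> real (A n) + real (B n) \<and> real (A n) + real (B n) \<le> real n" for n
  proof -
    define SA where "SA = {k \<in> {1..n}. LB 3 (a ^ k) = Some [True, False, False]}"
    define SB where "SB = {k \<in> {1..n}. LB 3 (a ^ k) = Some [True, False, True]}"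
    have disj: "SA \<inter> SB = {}" unfolding SA_def SB_def by auto
    have un: "card (SA \<union> SB) = A n + B n" unfolding A_def B_def SA_def[symmetric] SB_def[symmetric]
      using disj by (intro card_Un_disjoint) (auto simp: SA_def SB_def)
    have "SA \<union> SB \<subseteq> {1..n}" unfolding SA_def SB_def by auto
    then have cn: "card (SA \<union> SB) \<le> n" using card_mono[of "{1..n}" "SA \<union> SB"] by simp
    have "{1..n} \<subseteq> SA \<union> SB \<union> {1}"
    proof
      fix k assume k: "k \<in> {1..n}"
      show "k \<in> SA \<union> SB \<union> {1}"
      proof (cases "k = 1")
        case False
        then have "k \<ge> 2" using k by simp
        then have "a ^ 2 \<le> a ^ k" using assms by (intro power_increasing) auto
        moreover have "4 \<le> a ^ 2" using assms by (simp add: power2_eq_square) (metis Suc_1 Suc_leI mult_le_mono numeral_Bit0_eq_double add_2_eq_Suc' le_refl mult_2 numeral_2_eq_2)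
        ultimately have "a ^ k \<ge> 3" by simp
        then show ?thesis using LB_cases[of "a ^ k"] k unfolding SA_def SB_def by auto
      qed simp
    qed
    moreover have "finite SA" "finite SB" unfolding SA_def SB_def by auto
    ultimately have "n \<le> card (SA \<union> SB \<union> {1})" using card_mono[of "SA \<union> SB \<union> {1}" "{1..n}"] by simp
    moreover have "card (SA \<union> SB \<union> {1}) \<le> card (SA \<union> SB) + 1"
      using card_Un_le[of "SA \<union> SB" "{1}"] by simp
    ultimately show ?thesis using un cn by linarith
  qed
  have lo: "eventually (\<lambda>n. 1 - real (A n) / real n - 1 / real n \<le> real (B n) / real n) sequentially"
  proof (rule eventually_sequentiallyI[of 1])
    fix n :: nat assume "1 \<le> n"
    then have np: "real n > 0" by simp
    have "1 - real (A n) / real n - 1 / real n = (real n - 1 - real (A n)) / real n" using np by (simp add: field_simps)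
    also have "\<dots> \<le> real (B n) / real n" using AB[of n] np by (intro divide_right_mono) auto
    finally show "1 - real (A n) / real n - 1 / real n \<le> real (B n) / real n" .
  qed
  have hi: "eventually (\<lambda>n. real (B n) / real n \<le> 1 - real (A n) / real n) sequentially"
  proof (rule eventually_sequentiallyI[of 1])
    fix n :: nat assume "1 \<le> n"
    then have np: "real n > 0" by simp
    have "real (B n) / real n \<le> (real n - real (A n)) / real n" using AB[of n] np by (intro divide_right_mono) auto
    also have "\<dots> = 1 - real (A n) / real n" using np by (simp add: field_simps)
    finally show "real (B n) / real n \<le> 1 - real (A n) / real n" .
  qed
  have lA: "(\<lambda>n. real (A n) / real n) \<longlonglongrightarrow> bt" using l1 unfolding A_def bt_def .
  have t1: "(\<lambda>n. 1 - real (A n) / real n - 1 / real n) \<longlonglongrightarrow> 1 - bt - 0"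
    by (intro tendsto_diff tendsto_const lA lim_const_over_n)
  have t2: "(\<lambda>n. 1 - real (A n) / real n) \<longlonglongrightarrow> 1 - bt"
    by (intro tendsto_diff tendsto_const lA)
  have "(\<lambda>n. real (B n) / real n) \<longlonglongrightarrow> 1 - bt"
    using tendsto_sandwich[OF lo hi] t1 t2 by simp
  moreover have "1 - bt = log phi (phi / (1 + phi powr (-2)))"
  proof -
    have "0 < 1 + phi powr (-2)" using phi_pos by (simp add: add_pos_nonneg)
    then have "log phi (phi / (1 + phi powr (-2))) = log phi phi - bt"
      unfolding bt_def using phi_pos by (simp add: log_divide_pos)
    then show ?thesis using phi_gt1 by simp
  qed
  ultimately show "(\<lambda>n. real (card {k \<in> {1..n}. LB 3 (a ^ k) = Some [True, False, True]}) / real n)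
           \<longlonglongrightarrow> log phi (phi / (1 + phi powr (-2)))" unfolding B_def by simp
qed


end
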